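(* Let $f:\mathbb{R}^d\to\mathbb{R}$ be convex and $L$-smooth (i.e., $\|\nabla f(x)-\nabla f(y)\|\le L\|x-y\|$ for all $x,y$), and let $x^\star$ be a minimizer of $f$. Fix an integer $N\ge 1$ and define positive scalars $\theta_N=1$ and, for $k=N-1,\dots,0$, $\theta_k>0$ by $\theta_k^2-\theta_k=\theta_{k+1}^2$; additionally set $\theta_{N+1}=0$. Given $x_0\in\mathbb{R}^d$, let $v_0=\mathbf{0}$ and for $k=0,\dots,N-1$, $$v_{k+1}=v_k+\frac{1}{L\theta_k\theta_{k+1}^2}\nabla f(x_k),\qquad x_{k+1}=x_k-\frac{1}{L}\nabla f(x_k)-(2\theta_{k+1}^3-\theta_{k+1}^2)v_{k+1}.$$ Define, for $k=0,\dots,N$, $A_k=\frac{1}{\theta_k^2}\big(f(x_N)-f(x^\star)-\frac{1}{2L}\|\nabla f(x_N)\|^2\big)$, $B_k=\frac{1}{\theta_k^2}(f(x_k)-f(x^\star))$, $C_k=\frac{1}{2L\theta_k^2}\|\nabla f(x_k)\|^2$, and $E_k=\frac{\theta_{k+1}^2}{\theta_k}\langle\nabla f(x_k),v_k\rangle$. Then for every $k\in\{0,\dots,N-1\}$, $$A_k+B_{k+1}+C_{k+1}+E_{k+1}\le A_{k+1}+B_k+C_k+E_k-\theta_{k+1}\langle\nabla f(x_{k+1}),v_{k+1}\rangle+\sum_{i=k+1}^{N}\frac{\theta_i}{L\theta_k\theta_{k+1}^2}\langle\nabla f(x_k),\nabla f(x_i)\rangle.$$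
   Context: The iteration above is the paper's "momentum" reformulation of the optimized gradient method for gradient minimization (OGM-G). $\langle\cdot,\cdot\rangle$ and $\|\cdot\|$ are the Euclidean inner product and norm. *)

theory Defs
  imports "HOL-Analysis.Analysis"
begin

end

theory Submission
  imports Defs
begin

lemma line_deriv:
  fixes f :: "'a::euclidean_space \<Rightarrow> real" and g :: "'a \<Rightarrow> 'a"
  assumes grad: "\<And>y. (f has_derivative (\<lambda>h. g y \<bullet> h)) (at y)"
  shows "((\<lambda>t. f (y + t *\<^sub>R d)) has_real_derivative (g (y + t *\<^sub>R d) \<bullet> d)) (at t within S)"
proof -
  have 1: "((\<lambda>t. y + t *\<^sub>R d) has_derivative (\<lambda>s. s *\<^sub>R d)) (at t within S)"
    by (auto intro!: derivative_eq_intros)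
  have "((\<lambda>t. f (y + t *\<^sub>R d)) has_derivative (\<lambda>s. g (y + t *\<^sub>R d) \<bullet> (s *\<^sub>R d))) (at t within S)"
    using has_derivative_compose[OF 1 grad] by (simp add: o_def)
  moreover have "(\<lambda>s. g (y + t *\<^sub>R d) \<bullet> (s *\<^sub>R d)) = (*) (g (y + t *\<^sub>R d) \<bullet> d)"
    by (auto simp: mult.commute)
  ultimately show ?thesis by (simp add: has_field_derivative_def)
qed

lemma tangent:
  fixes f :: "'a::euclidean_space \<Rightarrow> real" and g :: "'a \<Rightarrow> 'a"
  assumes conv: "convex_on UNIV f"
    and grad: "\<And>y. (f has_derivative (\<lambda>h. g y \<bullet> h)) (at y)"
  shows "f y + g y \<bullet> (z - y) \<le> f z"
proof -
  define d where "d = z - y"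
  define h where "h = (\<lambda>t::real. f (y + t *\<^sub>R d))"
  have hc: "convex_on UNIV h"
  proof (rule convex_onI)
    fix t u v :: real assume t: "0 < t" "t < 1"
    have "y + ((1 - t) *\<^sub>R u + t *\<^sub>R v) *\<^sub>R d = (1 - t) *\<^sub>R (y + u *\<^sub>R d) + t *\<^sub>R (y + v *\<^sub>R d)"
      by (simp add: algebra_simps)
    then show "h ((1 - t) *\<^sub>R u + t *\<^sub>R v) \<le> (1 - t) * h u + t * h v"
      unfolding h_def using convex_onD[OF conv, of t] t by simp
  qed simp
  have "(h has_real_derivative (g y \<bullet> d)) (at 0 within UNIV)"
    unfolding h_def using line_deriv[OF grad, of y d 0 UNIV] by simp
  from convex_on_imp_above_tangent[OF hc _ _ _ this, of 1] have "h 1 - h 0 \<ge> g y \<bullet> d" by simp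
  then show ?thesis unfolding h_def d_def by simp
qed

lemma descent:
  fixes f :: "'a::euclidean_space \<Rightarrow> real" and g :: "'a \<Rightarrow> 'a"
  assumes grad: "\<And>y. (f has_derivative (\<lambda>h. g y \<bullet> h)) (at y)"
    and smooth: "\<And>y z. norm (g y - g z) \<le> L * norm (y - z)"
  shows "f z \<le> f y + g y \<bullet> (z - y) + L / 2 * (norm (z - y))\<^sup>2"
proof -
  define d where "d = z - y"
  define p where "p = (\<lambda>t::real. f (y + t *\<^sub>R d) - t * (g y \<bullet> d) - L / 2 * t\<^sup>2 * (norm d)\<^sup>2)"
  have "p 1 \<le> p 0"
  proof (rule deriv_nonpos_imp_antimono[where g = p and a = 0 and b = 1 and g' = "\<lambda>t. g (y + t *\<^sub>R d) \<bullet> d - g y \<bullet> d - L * t * (norm d)\<^sup>2"])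
    fix t :: real assume t: "t \<in> {0..1}"
    show "(p has_real_derivative g (y + t *\<^sub>R d) \<bullet> d - g y \<bullet> d - L * t * (norm d)\<^sup>2) (at t)"
    proof -
      have a: "((\<lambda>t. t * (g y \<bullet> d)) has_real_derivative g y \<bullet> d) (at t)"
        by (auto intro!: derivative_eq_intros)
      have b: "((\<lambda>t. L / 2 * t\<^sup>2 * (norm d)\<^sup>2) has_real_derivative L * t * (norm d)\<^sup>2) (at t)"
        by (auto intro!: derivative_eq_intros)
      show ?thesis unfolding p_def
        by (rule DERIV_diff[OF DERIV_diff[OF line_deriv[OF grad] a] b])
    qed
    have "(g (y + t *\<^sub>R d) - g y) \<bullet> d \<le> norm (g (y + t *\<^sub>R d) - g y) * norm d"
      by (rule norm_cauchy_schwarz)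
    also have "\<dots> \<le> (L * norm (t *\<^sub>R d)) * norm d"
      using smooth[of "y + t *\<^sub>R d" y] by (intro mult_right_mono) auto
    also have "\<dots> = L * t * (norm d)\<^sup>2" using t by (simp add: power2_eq_square)
    finally show "g (y + t *\<^sub>R d) \<bullet> d - g y \<bullet> d - L * t * (norm d)\<^sup>2 \<le> 0"
      by (simp add: inner_diff_left)
  qed simp
  then show ?thesis unfolding p_def d_def by simp
qed

lemma alg:
  fixes L a b c F0 F1 FN Fs n0 n1 nN c01 c0N w0 w1 s :: real
  assumes L: "L > 0" and a: "a > 0" and b: "b > 0" and ab: "a\<^sup>2 - a = b\<^sup>2" and cb: "c\<^sup>2 = b\<^sup>2 - b"
  and Q1: "F1 + c01 / L + (2 * b ^ 3 - b\<^sup>2) * w1 + (n0 - 2 * c01 + n1) / (2 * L) \<le> F0"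
  and Q2: "F0 - s / L - b ^ 4 * w0 + (nN - 2 * c0N + n0) / (2 * L) \<le> FN"
  shows "(1 / a\<^sup>2) * (FN - Fs - (1 / (2 * L)) * nN) + (1 / b\<^sup>2) * (F1 - Fs) + (1 / (2 * L * b\<^sup>2)) * n1 + (c\<^sup>2 / b) * w1
     \<le> (1 / b\<^sup>2) * (FN - Fs - (1 / (2 * L)) * nN) + (1 / a\<^sup>2) * (F0 - Fs) + (1 / (2 * L * a\<^sup>2)) * n0 + (b\<^sup>2 / a) * w0 - b * w1
       + (1 / (L * a * b\<^sup>2)) * (s - a * n0 + c0N)"
proof -
  have ab': "b\<^sup>2 = a * (a - 1)" using ab by (simp add: algebra_simps power2_eq_square)
  have a1: "a - 1 > 0" using ab' a b by (metis mult_pos_pos zero_less_power2 zero_less_mult_pos b less_irrefl)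
  have ia: "1 / a\<^sup>2 = (a - 1) / (a * b\<^sup>2)"
    using a a1 unfolding ab' by (simp add: field_simps power2_eq_square)
  have i2: "1 / (2 * L * a\<^sup>2) = (a - 1) / (2 * L * a * b\<^sup>2)"
    using a a1 L unfolding ab' by (simp add: field_simps power2_eq_square)
  have ba: "b\<^sup>2 / a = a - 1" using a unfolding ab' by (simp add: field_simps power2_eq_square)
  define q1 where "q1 = F0 - (F1 + c01 / L + (2 * b ^ 3 - b\<^sup>2) * w1 + (n0 - 2 * c01 + n1) / (2 * L))"
  define q2 where "q2 = FN - (F0 - s / L - b ^ 4 * w0 + (nN - 2 * c0N + n0) / (2 * L))"
  have "(1 / b\<^sup>2) * (FN - Fs - (1 / (2 * L)) * nN) + (1 / a\<^sup>2) * (F0 - Fs) + (1 / (2 * L * a\<^sup>2)) * n0 + (b\<^sup>2 / a) * w0 - b * w1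
       + (1 / (L * a * b\<^sup>2)) * (s - a * n0 + c0N) - ((1 / a\<^sup>2) * (FN - Fs - (1 / (2 * L)) * nN) + (1 / b\<^sup>2) * (F1 - Fs) + (1 / (2 * L * b\<^sup>2)) * n1 + (c\<^sup>2 / b) * w1)
     = q1 / b\<^sup>2 + q2 / (a * b\<^sup>2)"
    unfolding ia i2 cb q1_def q2_def using a b L
    by (simp add: field_simps power2_eq_square) (simp add: algebra_simps power_numeral_reduce)
  moreover have "q1 / b\<^sup>2 + q2 / (a * b\<^sup>2) \<ge> 0" using Q1 Q2 a b unfolding q1_def q2_def by simp
  ultimately show ?thesis by linarith
qed

lemma coco:
  fixes f :: "'a::euclidean_space \<Rightarrow> real" and g :: "'a \<Rightarrow> 'a"
  assumes L: "L > 0" and conv: "convex_on UNIV f"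
    and grad: "\<And>y. (f has_derivative (\<lambda>h. g y \<bullet> h)) (at y)"
    and smooth: "\<And>y z. norm (g y - g z) \<le> L * norm (y - z)"
  shows "f x + g x \<bullet> (y - x) + (norm (g y - g x))\<^sup>2 / (2 * L) \<le> f y"
proof -
  define D where "D = g y - g x"
  define z where "z = y - (1 / L) *\<^sub>R D"
  have t: "f x + g x \<bullet> (z - x) \<le> f z" by (rule tangent[OF conv grad])
  have d: "f z \<le> f y + g y \<bullet> (z - y) + L / 2 * (norm (z - y))\<^sup>2" by (rule descent[OF grad smooth])
  have e1: "g x \<bullet> (z - x) = g x \<bullet> (y - x) - (g x \<bullet> D) / L"
    unfolding z_def by (simp add: inner_diff_right algebra_simps)
  have e2: "g y \<bullet> (z - y) = - (g y \<bullet> D) / L"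
    unfolding z_def by (simp add: inner_diff_right)
  have e3: "(norm (z - y))\<^sup>2 = (norm D)\<^sup>2 / L\<^sup>2"
    unfolding z_def using L by (simp add: power_divide)
  have e4: "(norm D)\<^sup>2 = g y \<bullet> D - g x \<bullet> D"
    unfolding D_def by (simp add: power2_norm_eq_inner inner_diff_left)
  have "L / 2 * ((norm D)\<^sup>2 / L\<^sup>2) = (norm D)\<^sup>2 / (2 * L)"
    using L by (simp add: power2_eq_square field_simps)
  then have "f x + g x \<bullet> (y - x) \<le> f y + (g x \<bullet> D) / L - (g y \<bullet> D) / L + (norm D)\<^sup>2 / (2 * L)"
    using t d e1 e2 e3 by simp
  moreover have "(g x \<bullet> D) / L - (g y \<bullet> D) / L = - (norm D)\<^sup>2 / L"
    using e4 by (simp add: diff_divide_distrib)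
  moreover have "- (norm D)\<^sup>2 / L + (norm D)\<^sup>2 / (2 * L) = - ((norm D)\<^sup>2 / (2 * L))"
    using L by (simp add: field_simps)
  ultimately show ?thesis unfolding D_def by linarith
qed

theorem proposition1:
  fixes f :: "'a::euclidean_space \<Rightarrow> real" and g :: "'a \<Rightarrow> 'a"
    and L :: real and xs :: 'a and N :: nat and \<theta> :: "nat \<Rightarrow> real"
    and x v :: "nat \<Rightarrow> 'a" and k :: nat
  assumes L_pos: "L > 0"
    and conv: "convex_on UNIV f"
    and grad: "\<And>y. (f has_derivative (\<lambda>h. g y \<bullet> h)) (at y)"
    and smooth: "\<And>y z. norm (g y - g z) \<le> L * norm (y - z)"
    and minimizer: "\<And>y. f xs \<le> f y"
    and N_ge: "N \<ge> 1"
    and thetaN: "\<theta> N = 1"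
    and theta_pos: "\<And>i. i < N \<Longrightarrow> \<theta> i > 0"
    and theta_rec: "\<And>i. i < N \<Longrightarrow> (\<theta> i)\<^sup>2 - \<theta> i = (\<theta> (Suc i))\<^sup>2"
    and thetaN1: "\<theta> (N + 1) = 0"
    and v0: "v 0 = 0"
    and v_rec: "\<And>i. i < N \<Longrightarrow>
        v (Suc i) = v i + (1 / (L * \<theta> i * (\<theta> (Suc i))\<^sup>2)) *\<^sub>R g (x i)"
    and x_rec: "\<And>i. i < N \<Longrightarrow>
        x (Suc i) = x i - (1 / L) *\<^sub>R g (x i)
                    - (2 * (\<theta> (Suc i)) ^ 3 - (\<theta> (Suc i))\<^sup>2) *\<^sub>R v (Suc i)"
    and k_lt: "k < N"
  shows "(let A = (\<lambda>j. (1 / (\<theta> j)\<^sup>2) * (f (x N) - f xs - (1 / (2 * L)) * (norm (g (x N)))\<^sup>2));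
              B = (\<lambda>j. (1 / (\<theta> j)\<^sup>2) * (f (x j) - f xs));
              C = (\<lambda>j. (1 / (2 * L * (\<theta> j)\<^sup>2)) * (norm (g (x j)))\<^sup>2);
              E = (\<lambda>j. ((\<theta> (Suc j))\<^sup>2 / \<theta> j) * (g (x j) \<bullet> v j))
          in A k + B (Suc k) + C (Suc k) + E (Suc k)
             \<le> A (Suc k) + B k + C k + E k - \<theta> (Suc k) * (g (x (Suc k)) \<bullet> v (Suc k))
               + (\<Sum>i = Suc k..N. (\<theta> i / (L * \<theta> k * (\<theta> (Suc k))\<^sup>2)) * (g (x k) \<bullet> g (x i))))"

proof -
  have thpos: "\<theta> i > 0" if "i \<le> N" for i
    using theta_pos[of i] thetaN that by (cases "i = N") auto
  have thc: "(\<theta> (Suc (Suc i)))\<^sup>2 = (\<theta> (Suc i))\<^sup>2 - \<theta> (Suc i)" if "i < N" for i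
  proof (cases "Suc i = N")
    case True then show ?thesis using thetaN thetaN1 by simp
  next
    case False then show ?thesis using theta_rec[of "Suc i"] that by simp
  qed
  have closed: "x j - x N = (1 / L) *\<^sub>R (\<Sum>i = j..<N. \<theta> i *\<^sub>R g (x i)) + (\<theta> (Suc j)) ^ 4 *\<^sub>R v j"
    if "j \<le> N" for j
    using that
  proof (induction j rule: inc_induct)
    case base then show ?case using thetaN1 by simp
  next
    case (step n)
    define a where "a = \<theta> n"
    define b where "b = \<theta> (Suc n)"
    define c where "c = \<theta> (Suc (Suc n))"
    define S where "S = (\<Sum>i = Suc n..<N. \<theta> i *\<^sub>R g (x i))"
    have a: "a > 0" using thpos[of n] step by (simp add: a_def)
    have b: "b > 0" using thpos[of "Suc n"] step by (simp add: b_def)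
    have ab: "a\<^sup>2 - a = b\<^sup>2" using theta_rec[of n] step by (simp add: a_def b_def)
    have cb: "c\<^sup>2 = b\<^sup>2 - b" using thc[of n] step by (simp add: b_def c_def)
    have c4: "c ^ 4 = b ^ 4 - 2 * b ^ 3 + b\<^sup>2"
    proof -
      have "c ^ 4 = (c\<^sup>2)\<^sup>2" by simp
      also have "\<dots> = b ^ 4 - 2 * b ^ 3 + b\<^sup>2" unfolding cb by (simp add: power2_eq_square algebra_simps power_numeral_reduce)
      finally show ?thesis .
    qed
    have coef: "2 * b ^ 3 - b\<^sup>2 + c ^ 4 = b ^ 4" using c4 by simp
    have coef2: "1 / L + b ^ 4 * (1 / (L * a * b\<^sup>2)) = a / L"
    proof -
      have "b ^ 4 * (1 / (L * a * b\<^sup>2)) = b\<^sup>2 / (L * a)" using b by (simp add: power_numeral_reduce power2_eq_square field_simps)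
      moreover have "1 / L + b\<^sup>2 / (L * a) = a / L"
      proof -
        have e: "b\<^sup>2 = a * a - a" using ab by (simp add: power2_eq_square)
        show ?thesis unfolding e using a L_pos by (simp add: field_simps)
      qed
      ultimately show ?thesis by simp
    qed
    have IH: "x (Suc n) - x N = (1 / L) *\<^sub>R S + c ^ 4 *\<^sub>R v (Suc n)"
      using step.IH unfolding S_def c_def .
    have xs1: "x n - x (Suc n) = (1 / L) *\<^sub>R g (x n) + (2 * b ^ 3 - b\<^sup>2) *\<^sub>R v (Suc n)"
      using x_rec[of n] step by (simp add: b_def)
    have vs: "v (Suc n) = v n + (1 / (L * a * b\<^sup>2)) *\<^sub>R g (x n)"
      using v_rec[of n] step by (simp add: a_def b_def)
    have "x n - x N = (x n - x (Suc n)) + (x (Suc n) - x N)" by simp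
    also have "\<dots> = (1 / L) *\<^sub>R g (x n) + (2 * b ^ 3 - b\<^sup>2 + c ^ 4) *\<^sub>R v (Suc n) + (1 / L) *\<^sub>R S"
      unfolding xs1 IH by (simp add: algebra_simps)
    also have "\<dots> = (1 / L + b ^ 4 * (1 / (L * a * b\<^sup>2))) *\<^sub>R g (x n) + b ^ 4 *\<^sub>R v n + (1 / L) *\<^sub>R S"
      unfolding coef vs by (simp add: algebra_simps)
    also have "\<dots> = (a / L) *\<^sub>R g (x n) + b ^ 4 *\<^sub>R v n + (1 / L) *\<^sub>R S"
      unfolding coef2 ..
    also have "\<dots> = (1 / L) *\<^sub>R (\<Sum>i = n..<N. \<theta> i *\<^sub>R g (x i)) + b ^ 4 *\<^sub>R v n"
      using step(2) unfolding S_def a_def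
      by (simp add: sum.atLeast_Suc_lessThan scaleR_add_right)
    finally show ?case unfolding b_def .
  qed
  define a where "a = \<theta> k"
  define b where "b = \<theta> (Suc k)"
  define c where "c = \<theta> (Suc (Suc k))"
  define S where "S = (\<Sum>i = k..<N. \<theta> i *\<^sub>R g (x i))"
  have a: "a > 0" using thpos[of k] k_lt by (simp add: a_def)
  have b: "b > 0" using thpos[of "Suc k"] k_lt by (simp add: b_def)
  have ab: "a\<^sup>2 - a = b\<^sup>2" using theta_rec[of k] k_lt by (simp add: a_def b_def)
  have cb: "c\<^sup>2 = b\<^sup>2 - b" using thc[of k] k_lt by (simp add: b_def c_def)
  have Q1: "f (x (Suc k)) + g (x (Suc k)) \<bullet> (x k - x (Suc k)) + (norm (g (x k) - g (x (Suc k))))\<^sup>2 / (2 * L) \<le> f (x k)"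
    by (rule coco[OF L_pos conv grad smooth])
  have Q2: "f (x k) + g (x k) \<bullet> (x N - x k) + (norm (g (x N) - g (x k)))\<^sup>2 / (2 * L) \<le> f (x N)"
    by (rule coco[OF L_pos conv grad smooth])
  have xs1: "x k - x (Suc k) = (1 / L) *\<^sub>R g (x k) + (2 * b ^ 3 - b\<^sup>2) *\<^sub>R v (Suc k)"
    using x_rec[of k] k_lt by (simp add: b_def)
  have cl: "x N - x k = - ((1 / L) *\<^sub>R S + b ^ 4 *\<^sub>R v k)"
    using closed[of k] k_lt unfolding S_def b_def by (simp add: algebra_simps)
  have i1: "g (x (Suc k)) \<bullet> (x k - x (Suc k)) = (g (x k) \<bullet> g (x (Suc k))) / L + (2 * b ^ 3 - b\<^sup>2) * (g (x (Suc k)) \<bullet> v (Suc k))"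
    unfolding xs1 by (simp add: inner_add_right inner_commute)
  have i2: "g (x k) \<bullet> (x N - x k) = - ((g (x k) \<bullet> S) / L) - b ^ 4 * (g (x k) \<bullet> v k)"
    unfolding cl by (simp add: inner_diff_right inner_minus_right)
  have n1: "(norm (g (x k) - g (x (Suc k))))\<^sup>2 = (norm (g (x k)))\<^sup>2 - 2 * (g (x k) \<bullet> g (x (Suc k))) + (norm (g (x (Suc k))))\<^sup>2"
    by (simp add: power2_norm_eq_inner inner_diff_left inner_diff_right inner_commute)
  have n2: "(norm (g (x N) - g (x k)))\<^sup>2 = (norm (g (x N)))\<^sup>2 - 2 * (g (x k) \<bullet> g (x N)) + (norm (g (x k)))\<^sup>2"
    by (simp add: power2_norm_eq_inner inner_diff_left inner_diff_right inner_commute)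
  have sumeq: "(\<Sum>i = Suc k..N. (\<theta> i / (L * a * b\<^sup>2)) * (g (x k) \<bullet> g (x i)))
      = (1 / (L * a * b\<^sup>2)) * (g (x k) \<bullet> S - a * (norm (g (x k)))\<^sup>2 + g (x k) \<bullet> g (x N))"
  proof -
    have "(\<Sum>i = Suc k..N. (\<theta> i / (L * a * b\<^sup>2)) * (g (x k) \<bullet> g (x i)))
        = (1 / (L * a * b\<^sup>2)) * (g (x k) \<bullet> (\<Sum>i = Suc k..N. \<theta> i *\<^sub>R g (x i)))"
      by (simp add: inner_sum_right sum_distrib_left)
    moreover have "(\<Sum>i = Suc k..N. \<theta> i *\<^sub>R g (x i)) = S - a *\<^sub>R g (x k) + g (x N)"
    proof -
      have "S = a *\<^sub>R g (x k) + (\<Sum>i = Suc k..<N. \<theta> i *\<^sub>R g (x i))"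
        unfolding S_def a_def using k_lt by (simp add: sum.atLeast_Suc_lessThan)
      moreover have "(\<Sum>i = Suc k..N. \<theta> i *\<^sub>R g (x i)) = (\<Sum>i = Suc k..<N. \<theta> i *\<^sub>R g (x i)) + g (x N)"
        using k_lt thetaN by (simp add: sum.atLeastLessThan_Suc atLeastLessThanSuc_atLeastAtMost[symmetric])
      ultimately show ?thesis by simp
    qed
    ultimately show ?thesis by (simp add: inner_diff_right inner_add_right power2_norm_eq_inner)
  qed
  have main: "(1 / a\<^sup>2) * (f (x N) - f xs - (1 / (2 * L)) * (norm (g (x N)))\<^sup>2) + (1 / b\<^sup>2) * (f (x (Suc k)) - f xs)
       + (1 / (2 * L * b\<^sup>2)) * (norm (g (x (Suc k))))\<^sup>2 + (c\<^sup>2 / b) * (g (x (Suc k)) \<bullet> v (Suc k))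
     \<le> (1 / b\<^sup>2) * (f (x N) - f xs - (1 / (2 * L)) * (norm (g (x N)))\<^sup>2) + (1 / a\<^sup>2) * (f (x k) - f xs)
       + (1 / (2 * L * a\<^sup>2)) * (norm (g (x k)))\<^sup>2 + (b\<^sup>2 / a) * (g (x k) \<bullet> v k) - b * (g (x (Suc k)) \<bullet> v (Suc k))
       + (1 / (L * a * b\<^sup>2)) * (g (x k) \<bullet> S - a * (norm (g (x k)))\<^sup>2 + g (x k) \<bullet> g (x N))"
  proof -
    have Q1': "f (x (Suc k)) + (g (x k) \<bullet> g (x (Suc k))) / L + (2 * b ^ 3 - b\<^sup>2) * (g (x (Suc k)) \<bullet> v (Suc k))
      + ((norm (g (x k)))\<^sup>2 - 2 * (g (x k) \<bullet> g (x (Suc k))) + (norm (g (x (Suc k))))\<^sup>2) / (2 * L) \<le> f (x k)"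
      using Q1 unfolding i1 n1 by simp
    have Q2': "f (x k) - (g (x k) \<bullet> S) / L - b ^ 4 * (g (x k) \<bullet> v k)
      + ((norm (g (x N)))\<^sup>2 - 2 * (g (x k) \<bullet> g (x N)) + (norm (g (x k)))\<^sup>2) / (2 * L) \<le> f (x N)"
      using Q2 unfolding i2 n2 by simp
    show ?thesis by (rule alg[OF L_pos a b ab cb Q1' Q2'])
  qed
  show ?thesis
    unfolding Let_def sumeq[unfolded a_def b_def] using main[unfolded a_def b_def c_def] by simp
qed

end
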